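(* Let $r$ and $s$ be integers each of which is positive or odd. Then for every integer $n\ge0$ with $n\ne-(r+s)/2$ and all integers $\alpha,\beta$ with $0\le\alpha,\beta\le n$, $$\delta_{\alpha+\beta,n-1}+\sum_{\substack{\ell\ge\alpha,\ m\ge\beta\\ \ell+m=n}}b_r(\ell,\alpha)\,b_s(m,\beta)=\sum_{k=0}^n b_{r+s}(n,k)\Big(b_r(k-\beta,\alpha)+b_s(k-\alpha,\beta)\Big).$$
   Context: $\delta_{i,j}$ is the Kronecker delta and $B_j$ are the Bernoulli numbers, $\frac{t}{e^t-1}=\sum_j B_j\frac{t^j}{j!}$. For $q\in\mathbb{Z}$, integers $n\ge0$ with $n\ne -q/2$, and $0\le i\le n$, define $$b_q(n,i):=\begin{cases}\frac{2}{2n+q}\binom{2n+q}{2i+q}B_{2(n-i)}, & n\ge\max\{0,\lfloor -q/2\rfloor+1\},\\ \frac{2}{2i+q}\binom{-2i-q}{-2n-q}B_{2(n-i)}, & 0\le n\le\lfloor-(q+1)/2\rfloor,\end{cases}$$ with $\binom{N}{j}=0$ for $j<0$; and set $b_q(n,i):=0$ whenever $n<0$ or $i>n$. (The paper denotes $b_q(n,i)$ by ${n\brack i}_q$.) *)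

theory Defs
  imports "HOL-Computational_Algebra.Formal_Power_Series"
begin

definition bernoulli :: "nat \<Rightarrow> real" where
  "bernoulli j = fact j * fps_nth (fps_X div (fps_exp 1 - 1) :: real fps) j"

definition ibinom :: "int \<Rightarrow> int \<Rightarrow> real" where
  "ibinom N j = (if j < 0 then 0 else (of_int N :: real) gchoose (nat j))"

text \<open>The paper's coefficient b_q(n,i). Value 0 outside the range of definition
  (n < 0, i > n, i < 0, or 2n + q = 0, where it is undefined in the paper).\<close>
definition bq :: "int \<Rightarrow> int \<Rightarrow> int \<Rightarrow> real" where
  "bq q n i =
     (if n < 0 \<or> i < 0 \<or> i > n \<or> 2*n + q = 0 then 0
      else if n \<ge> max 0 ((- q) div 2 + 1) then
        2 / of_int (2*n + q) * ibinom (2*n + q) (2*i + q) * bernoulli (nat (2*(n - i)))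
      else if n \<le> (- (q + 1)) div 2 then
        2 / of_int (2*i + q) * ibinom (-2*i - q) (-2*n - q) * bernoulli (nat (2*(n - i)))
      else 0)"

end

theory Submission
  imports Defs "HOL-Computational_Algebra.Polynomial"
begin
unbundle fps_syntax




definition EE :: "real fps" where "EE = fps_X div (fps_exp 1 - 1)"

lemma subdeg_expm1: "subdegree (fps_exp (x::real) - 1) = 1" if "x \<noteq> 0"
  by (rule subdegreeI) (use that in \<open>auto simp: less_Suc_eq\<close>)

lemma expm1_nz: "fps_exp (x::real) - 1 \<noteq> 0" if "x \<noteq> 0"
proof
  assume "fps_exp x - 1 = 0"
  hence "(fps_exp x - 1) $ 1 = 0" by simp
  thus False using that by simp
qed

lemma EE_eq: "EE * (fps_exp 1 - 1) = fps_X"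
proof -
  have "(fps_exp 1 - 1 :: real fps) dvd fps_X"
    using fps_dvd_iff[OF expm1_nz[of 1], of fps_X] subdeg_expm1[of 1] by simp
  thus ?thesis unfolding EE_def by simp
qed

lemma EE_nth: "EE $ m = bernoulli m / fact m"
  by (simp add: bernoulli_def EE_def)

definition sc :: "real \<Rightarrow> real fps \<Rightarrow> real fps" where
  "sc x f = Abs_fps (\<lambda>m. x^m * f$m)"

lemma sc_nth[simp]: "sc x f $ m = x^m * f$m" by (simp add: sc_def)

lemma sc_mult: "sc x (f*g) = sc x f * sc x g"
proof (rule fps_ext)
  fix m
  have "sc x (f*g) $ m = (\<Sum>i=0..m. x^m * (f$i * g$(m-i)))"
    by (simp add: fps_mult_nth sum_distrib_left)
  also have "\<dots> = (\<Sum>i=0..m. (x^i * f$i) * (x^(m-i) * g$(m-i)))"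
    by (intro sum.cong refl) (simp add: power_add[symmetric] mult_ac)
  finally show "sc x (f*g) $ m = (sc x f * sc x g) $ m" by (simp add: fps_mult_nth)
qed

lemma sc_diff: "sc x (f - g) = sc x f - sc x g"
  by (rule fps_ext) (simp add: algebra_simps)
lemma sc_add: "sc x (f + g) = sc x f + sc x g"
  by (rule fps_ext) (simp add: algebra_simps)
lemma sc_one: "sc x 1 = 1"
  by (rule fps_ext) simp
lemma sc_X: "sc x fps_X = fps_const x * fps_X"
  by (rule fps_ext) (simp add: fps_X_def)
lemma sc_exp: "sc x (fps_exp 1) = fps_exp x"
  by (rule fps_ext) simp

lemma EE_neg: "sc (-1) EE = EE + fps_X"
proof -
  let ?e = "fps_exp (1::real)" and ?e' = "fps_exp (-1::real)"
  have ee: "?e * ?e' = 1" using fps_exp_add_mult[of "1::real" "-1"] by simp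
  have h1: "sc (-1) EE * (?e' - 1) = - fps_X"
    using arg_cong[OF EE_eq, of "sc (-1)"]
    by (simp add: sc_mult sc_diff sc_one sc_X sc_exp flip: fps_const_neg)
  have h2: "(EE + fps_X) * (?e' - 1) = - fps_X"
  proof -
    have "(EE + fps_X) * (?e' - 1) = (EE + fps_X) * (?e' - 1) * (?e * ?e')" by (simp add: ee)
    also have "\<dots> = - (EE * (?e - 1) + fps_X * (?e - 1)) * ?e'"
      by (simp add: algebra_simps ee)
    also have "\<dots> = - fps_X * (?e * ?e')" by (simp only: EE_eq) (simp add: algebra_simps)
    finally show ?thesis by (simp add: ee)
  qed
  have "(sc (-1) EE - (EE + fps_X)) * (?e' - 1) = 0" using h1 h2 by (simp add: algebra_simps)
  moreover have "?e' - 1 \<noteq> 0" by (rule expm1_nz) simp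
  ultimately show ?thesis by simp
qed

lemma EE_odd: "odd m \<Longrightarrow> EE $ m = (if m = 1 then -1/2 else 0)"
proof -
  assume "odd m"
  have "sc (-1) EE $ m = (EE + fps_X) $ m" by (simp add: EE_neg)
  hence "- EE $ m = EE $ m + (if m = 1 then 1 else 0)"
    using \<open>odd m\<close> by (simp add: fps_X_def)
  thus ?thesis by (auto split: if_splits)
qed

definition cc :: "real \<Rightarrow> real fps" where
  "cc x = Abs_fps (\<lambda>m. if even m then x^m * EE$m else 0)"

lemma cc_eq: "cc x = sc x EE + fps_const (x/2) * fps_X"
  by (rule fps_ext) (auto simp: cc_def fps_X_def EE_odd)

lemma cc_exp: "2 * cc x * (fps_exp x - 1) = fps_const x * fps_X * (fps_exp x + 1)"
proof -
  have h: "sc x EE * (fps_exp x - 1) = fps_const x * fps_X"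
    using arg_cong[OF EE_eq, of "sc x"] by (simp add: sc_mult sc_diff sc_one sc_X sc_exp)
  have "2 * cc x * (fps_exp x - 1) = 2 * (sc x EE * (fps_exp x - 1)) + fps_const x * fps_X * (fps_exp x - 1)"
    unfolding cc_eq by (simp add: algebra_simps numeral_fps_const)
  also have "\<dots> = fps_const x * fps_X * (fps_exp x + 1)"
    unfolding h by (simp add: algebra_simps)
  finally show ?thesis .
qed





lemma ring_id:
  fixes Cx C1 Cu p q u X :: "'a::comm_ring_1"
  assumes "2*Cx*(p-1) = u*X*(p+1)" "2*C1*(q-1) = X*(q+1)" "2*Cu*(p*q-1) = (u+1)*X*(p*q+1)"
  shows "(4*((u+1)*X*Cx*C1) + u*(u+1)*X^3 - 4*(Cu*(X*Cx + u*X*C1))) * ((p-1)*(q-1)*(p*q-1)) = 0"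
proof -
  have "(4*((u+1)*X*Cx*C1) + u*(u+1)*X^3 - 4*(Cu*(X*Cx + u*X*C1))) * ((p-1)*(q-1)*(p*q-1))
    = (u+1)*X*(2*Cx*(p-1))*(2*C1*(q-1))*(p*q-1) + u*(u+1)*X^3*((p-1)*(q-1)*(p*q-1))
      - (2*Cu*(p*q-1))*(X*(2*Cx*(p-1))*(q-1) + u*X*(2*C1*(q-1))*(p-1))"
    by (simp add: algebra_simps)
  also have "\<dots> = (u+1)*X*(u*X*(p+1))*(X*(q+1))*(p*q-1) + u*(u+1)*X^3*((p-1)*(q-1)*(p*q-1))
      - ((u+1)*X*(p*q+1))*(X*(u*X*(p+1))*(q-1) + u*X*(X*(q+1))*(p-1))"
    by (simp only: assms)
  also have "\<dots> = 0" by (simp add: algebra_simps power3_eq_cube)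
  finally show ?thesis .
qed

lemma cc_main:
  assumes "x \<noteq> 0" "x \<noteq> -1"
  shows "4*(fps_const (x+1)*fps_X*cc x*cc 1) + fps_const (x*(x+1)) * fps_X^3
       = 4*(cc (x+1)*(fps_X*cc x + fps_const x*fps_X*cc 1))"
proof -
  let ?p = "fps_exp x" and ?q = "fps_exp (1::real)"
  have pq: "fps_exp (x+1) = ?p * ?q" by (rule fps_exp_add_mult)
  have h1: "2*cc x*(?p-1) = fps_const x*fps_X*(?p+1)" by (rule cc_exp)
  have h2: "2*cc 1*(?q-1) = fps_X*(?q+1)" using cc_exp[of 1] by simp
  have h3: "2*cc (x+1)*(?p*?q-1) = (fps_const x+1)*fps_X*(?p*?q+1)"
  proof -
    have cx1: "fps_const (x+1) = fps_const x + (1::real fps)" by (rule fps_ext) simp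
    show ?thesis using cc_exp[of "x+1"] unfolding pq cx1 .
  qed
  have "(4*((fps_const x+1)*fps_X*cc x*cc 1) + fps_const x*(fps_const x+1)*fps_X^3
      - 4*(cc (x+1)*(fps_X*cc x + fps_const x*fps_X*cc 1))) * ((?p-1)*(?q-1)*(?p*?q-1)) = 0"
    by (rule ring_id[OF h1 h2 h3])
  moreover have "(?p-1)*(?q-1)*(?p*?q-1) \<noteq> 0"
    using expm1_nz[of x] expm1_nz[of 1] expm1_nz[of "x+1"] assms by (simp add: pq)
  ultimately have "4*((fps_const x+1)*fps_X*cc x*cc 1) + fps_const x*(fps_const x+1)*fps_X^3
      = 4*(cc (x+1)*(fps_X*cc x + fps_const x*fps_X*cc 1))" by simp
  moreover have cx1: "fps_const (x+1) = fps_const x + (1::real fps)" by (rule fps_ext) simp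
  moreover have c2: "fps_const (x*(x+1)) = fps_const x * (fps_const x + (1::real fps))"
    by (rule fps_ext) (simp add: algebra_simps)
  ultimately show ?thesis unfolding cx1 c2 by simp
qed

lemma even_conv:
  fixes f g :: "real fps"
  assumes "\<And>m. odd m \<Longrightarrow> f$m = 0" "\<And>m. odd m \<Longrightarrow> g$m = 0"
  shows "(f*g)$(2*d) = (\<Sum>i\<le>d. f$(2*i) * g$(2*(d-i)))"
proof -
  have "(f*g)$(2*d) = (\<Sum>i\<in>{0..2*d}. f$i * g$(2*d-i))" by (simp add: fps_mult_nth)
  also have "\<dots> = (\<Sum>i\<in>(\<lambda>i. 2*i)`{..d}. f$i * g$(2*d-i))"
  proof (rule sum.mono_neutral_right)
    show "\<forall>i\<in>{0..2*d} - (\<lambda>i. 2*i)`{..d}. f$i * g$(2*d-i) = 0"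
    proof
      fix i assume i: "i \<in> {0..2*d} - (\<lambda>i. 2*i)`{..d}"
      have "odd i"
      proof
        assume "even i"
        then obtain k where "i = 2*k" by (elim evenE)
        with i show False by auto
      qed
      thus "f$i * g$(2*d-i) = 0" by (simp add: assms)
    qed
  qed auto
  also have "\<dots> = (\<Sum>i\<le>d. f$(2*i) * g$(2*d-2*i))"
    by (subst sum.reindex) (auto simp: inj_on_def)
  finally show ?thesis by (simp add: right_diff_distrib')
qed

lemma cc_nth: "cc x $ m = (if even m then x^m * EE$m else 0)"
  by (simp add: cc_def)

lemma pointwise:
  assumes "x \<noteq> 0" "x \<noteq> -1"
  shows "4*(x+1)*(\<Sum>i\<le>d. x^(2*i)*EE$(2*i)*EE$(2*(d-i))) + x*(x+1)*(if d = 1 then 1 else 0)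
       = 4*(\<Sum>i\<le>d. (x+1)^(2*i)*EE$(2*i)*(x^(2*(d-i))*EE$(2*(d-i))))
         + 4*x*(\<Sum>i\<le>d. (x+1)^(2*i)*EE$(2*i)*EE$(2*(d-i)))"
proof -
  have ev: "\<And>y m. odd m \<Longrightarrow> cc y $ m = 0" by (simp add: cc_nth)
  have e1: "(cc x * cc 1)$(2*d) = (\<Sum>i\<le>d. x^(2*i)*EE$(2*i)*EE$(2*(d-i)))"
    by (subst even_conv) (auto simp: ev cc_nth mult_ac)
  have e2: "(cc (x+1) * cc x)$(2*d) = (\<Sum>i\<le>d. (x+1)^(2*i)*EE$(2*i)*(x^(2*(d-i))*EE$(2*(d-i))))"
    by (subst even_conv) (auto simp: ev cc_nth mult_ac)
  have e3: "(cc (x+1) * cc 1)$(2*d) = (\<Sum>i\<le>d. (x+1)^(2*i)*EE$(2*i)*EE$(2*(d-i)))"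
    by (subst even_conv) (auto simp: ev cc_nth mult_ac)
  have L: "4*(fps_const (x+1)*fps_X*cc x*cc 1) + fps_const (x*(x+1)) * fps_X^3
      = fps_X * (fps_const (4*(x+1)) * (cc x * cc 1) + fps_const (x*(x+1)) * fps_X^2)"
    by (simp add: algebra_simps numeral_fps_const power3_eq_cube power2_eq_square)
  have R: "4*(cc (x+1)*(fps_X*cc x + fps_const x*fps_X*cc 1))
      = fps_X * (fps_const 4 * (cc (x+1) * cc x) + fps_const (4*x) * (cc (x+1) * cc 1))"
    by (simp add: algebra_simps numeral_fps_const)
  have "(fps_X * (fps_const (4*(x+1)) * (cc x * cc 1) + fps_const (x*(x+1)) * fps_X^2)) $ Suc (2*d)
      = (fps_X * (fps_const 4 * (cc (x+1) * cc x) + fps_const (4*x) * (cc (x+1) * cc 1))) $ Suc (2*d)"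
    using cc_main[OF assms] L R by simp
  hence "4*(x+1)*(cc x * cc 1)$(2*d) + x*(x+1)*(fps_X^2 :: real fps)$(2*d)
      = 4*(cc (x+1) * cc x)$(2*d) + 4*x*(cc (x+1) * cc 1)$(2*d)"
    by simp
  moreover have "(fps_X^2 :: real fps)$(2*d) = (if d = 1 then 1 else 0)"
    by (simp add: fps_X_power_iff)
  ultimately show ?thesis by (simp add: e1 e2 e3)
qed





definition ww :: "nat \<Rightarrow> nat \<Rightarrow> real" where "ww d i = EE$(2*i) * EE$(2*(d-i))"

definition PL :: "nat \<Rightarrow> real poly" where
  "PL d = (\<Sum>i\<le>d. smult (4 * ww d i) ([:1,1:] * monom 1 (2*i)))
          + smult (if d = 1 then 1 else 0) ([:1,1:] * monom 1 1)"

definition PR :: "nat \<Rightarrow> real poly" where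
  "PR d = (\<Sum>i\<le>d. smult (4 * ww d i) ([:1,1:]^(2*i) * monom 1 (2*(d-i)) + [:1,1:]^(2*i) * monom 1 1))"

lemma poly_PL: "poly (PL d) x = 4*(x+1)*(\<Sum>i\<le>d. x^(2*i)*EE$(2*i)*EE$(2*(d-i))) + x*(x+1)*(if d = 1 then 1 else 0)"
  by (simp add: PL_def poly_sum poly_monom sum_distrib_left ww_def algebra_simps)

lemma poly_PR: "poly (PR d) x = 4*(\<Sum>i\<le>d. (x+1)^(2*i)*EE$(2*i)*(x^(2*(d-i))*EE$(2*(d-i))))
         + 4*x*(\<Sum>i\<le>d. (x+1)^(2*i)*EE$(2*i)*EE$(2*(d-i)))"
  by (simp add: PR_def poly_sum poly_monom sum_distrib_left ww_def algebra_simps sum.distrib)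

lemma PL_PR: "PL d = PR d"
proof (rule ccontr)
  assume "PL d \<noteq> PR d"
  hence "PL d - PR d \<noteq> 0" by simp
  hence fin: "finite {x. poly (PL d - PR d) x = 0}" by (rule poly_roots_finite)
  have "UNIV - {0, -1} \<subseteq> {x. poly (PL d - PR d) x = 0}"
    using pointwise[of _ d] by (auto simp: poly_PL poly_PR)
  hence "finite (UNIV - {0, -1::real})" using fin finite_subset by blast
  hence "finite (UNIV :: real set)" by simp
  thus False by (simp add: infinite_UNIV_char_0)
qed




definition LL :: "real \<Rightarrow> real \<Rightarrow> nat \<Rightarrow> real poly \<Rightarrow> real" where
  "LL A B M p = (\<Sum>a\<le>M. coeff p a * (pochhammer A a * pochhammer B (M-a)))"

lemma LL_add: "LL A B M (p + q) = LL A B M p + LL A B M q"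
  by (simp add: LL_def algebra_simps sum.distrib)

lemma LL_smult: "LL A B M (smult c p) = c * LL A B M p"
  by (simp add: LL_def sum_distrib_left mult_ac)

lemma LL_sum: "LL A B M (\<Sum>i\<in>I. f i) = (\<Sum>i\<in>I. LL A B M (f i))"
  by (simp add: LL_def coeff_sum sum_distrib_right sum.swap[of _ I])

lemma coeff_lin_pow: "coeff ([:1,1:]^n :: real poly) k = of_nat (n choose k)"
proof (cases "k \<le> n")
  case True thus ?thesis using coeff_linear_poly_power[OF True, of 1 1] by simp
next
  case False
  have "degree ([:1,1:]^n :: real poly) \<le> n" using degree_power_le[of "[:1,1:]::real poly" n] by simp
  hence "coeff ([:1,1:]^n :: real poly) k = 0" using False by (intro coeff_eq_0) auto
  thus ?thesis using False by simp
qed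

lemma LL_basic:
  assumes "m + n \<le> M"
  shows "LL A B M ([:1,1:]^n * monom 1 m)
       = pochhammer A m * pochhammer B (M-m-n) * pochhammer (A + B + of_nat (M-n)) n"
proof -
  let ?f = "\<lambda>a. pochhammer A a * pochhammer B (M-a)"
  have "LL A B M ([:1,1:]^n * monom 1 m) = (\<Sum>a\<le>M. (if a < m then 0 else of_nat (n choose (a-m))) * ?f a)"
    unfolding LL_def by (intro sum.cong refl) (simp only: mult.commute[of _ "monom 1 m"] coeff_monom_mult coeff_lin_pow mult_1)
  also have "\<dots> = (\<Sum>a\<in>(\<lambda>k. m+k)`{..M-m}. (if a < m then 0 else of_nat (n choose (a-m))) * ?f a)"
  proof (rule sum.mono_neutral_right)
    show "(\<lambda>k. m+k)`{..M-m} \<subseteq> {..M}" using assms by auto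
    show "\<forall>a\<in>{..M} - (\<lambda>k. m+k)`{..M-m}. (if a < m then 0 else of_nat (n choose (a-m))) * ?f a = 0"
    proof
      fix a assume a: "a \<in> {..M} - (\<lambda>k. m+k)`{..M-m}"
      have "a < m"
      proof (rule ccontr)
        assume "\<not> a < m"
        hence "a = m + (a-m)" "a - m \<in> {..M-m}" using a by auto
        hence "a \<in> (\<lambda>k. m+k)`{..M-m}" by (metis rev_image_eqI)
        with a show False by auto
      qed
      thus "(if a < m then 0 else of_nat (n choose (a-m))) * ?f a = 0" by simp
    qed
  qed auto
  also have "\<dots> = (\<Sum>k\<le>M-m. of_nat (n choose k) * ?f (m+k))"
    by (subst sum.reindex) (auto simp: inj_on_def)
  also have "\<dots> = (\<Sum>k\<le>n. of_nat (n choose k) * ?f (m+k))"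
    by (rule sum.mono_neutral_right) (use assms in auto)
  also have "\<dots> = (\<Sum>k\<le>n. pochhammer A m * pochhammer B (M-m-n) *
       (of_nat (n choose k) * pochhammer (A + of_nat m) k * pochhammer (B + of_nat (M-m-n)) (n-k)))"
  proof (intro sum.cong refl)
    fix k assume k: "k \<in> {..n}"
    have e1: "pochhammer A (m+k) = pochhammer A m * pochhammer (A + of_nat m) k"
      by (rule pochhammer_product')
    have "M - (m+k) = (M-m-n) + (n-k)" using k assms by auto
    hence e2: "pochhammer B (M-(m+k)) = pochhammer B (M-m-n) * pochhammer (B + of_nat (M-m-n)) (n-k)"
      by (simp add: pochhammer_product')
    show "of_nat (n choose k) * ?f (m+k) = pochhammer A m * pochhammer B (M-m-n) *
       (of_nat (n choose k) * pochhammer (A + of_nat m) k * pochhammer (B + of_nat (M-m-n)) (n-k))"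
      by (simp add: e1 e2 mult_ac)
  qed
  also have "\<dots> = pochhammer A m * pochhammer B (M-m-n) * pochhammer (A + of_nat m + (B + of_nat (M-m-n))) n"
    by (simp add: pochhammer_binomial_sum sum_distrib_left)
  also have "A + of_nat m + (B + of_nat (M-m-n)) = A + B + of_nat (M-n)"
    using assms by (simp add: of_nat_diff)
  finally show ?thesis .
qed




lemma core:
  fixes A B :: real
  shows "(A+B+2*of_nat d) * ((\<Sum>i\<le>d. 4*ww d i*pochhammer A (2*i)*pochhammer B (2*(d-i))) + (if d=1 then A*B else 0))
   = (\<Sum>i\<le>d. 4*ww d i * pochhammer (A+B+of_nat(2*(d-i))+1) (2*i) * (B*pochhammer A (2*(d-i)) + A*pochhammer B (2*(d-i))))"
proof -
  let ?M = "2*d+1"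
  have lin: "[:1,1:] = ([:1,1:]^1 :: real poly)" by simp
  have "LL A B ?M (PL d) = (\<Sum>i\<le>d. 4*ww d i * LL A B ?M ([:1,1:]^1 * monom 1 (2*i)))
        + (if d = 1 then 1 else 0) * LL A B ?M ([:1,1:]^1 * monom 1 1)"
    unfolding PL_def by (simp only: LL_add LL_sum LL_smult lin[symmetric])
  also have "\<dots> = (A+B+2*of_nat d) * ((\<Sum>i\<le>d. 4*ww d i*pochhammer A (2*i)*pochhammer B (2*(d-i))) + (if d=1 then A*B else 0))"
  proof -
    have "(\<Sum>i\<le>d. 4*ww d i * LL A B ?M ([:1,1:]^1 * monom 1 (2*i)))
        = (\<Sum>i\<le>d. (A+B+2*of_nat d) * (4*ww d i*pochhammer A (2*i)*pochhammer B (2*(d-i))))"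
    proof (intro sum.cong refl)
      fix i assume i: "i \<in> {..d}"
      have "LL A B ?M ([:1,1:]^1 * monom 1 (2*i)) = pochhammer A (2*i) * pochhammer B (?M-2*i-1) * pochhammer (A + B + of_nat (?M-1)) 1"
        by (rule LL_basic) (use i in auto)
      moreover have "?M-2*i-1 = 2*(d-i)" using i by auto
      ultimately show "4*ww d i * LL A B ?M ([:1,1:]^1 * monom 1 (2*i)) = (A+B+2*of_nat d) * (4*ww d i*pochhammer A (2*i)*pochhammer B (2*(d-i)))"
        by (simp add: pochhammer_1 algebra_simps)
    qed
    moreover have "(if d = 1 then 1 else 0) * LL A B ?M ([:1,1:]^1 * monom 1 1) = (A+B+2*of_nat d) * (if d=1 then A*B else 0)"
    proof (cases "d = 1")
      case True
      have "LL A B 3 ([:1,1:]^1 * monom 1 1) = pochhammer A 1 * pochhammer B (3-1-1) * pochhammer (A + B + of_nat (3-1)) 1"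
        by (rule LL_basic) auto
      thus ?thesis using True by (simp add: pochhammer_1 algebra_simps numeral_eq_Suc)
    qed simp
    ultimately show ?thesis by (simp add: sum_distrib_left algebra_simps)
  qed
  finally have L: "LL A B ?M (PL d) = (A+B+2*of_nat d) * ((\<Sum>i\<le>d. 4*ww d i*pochhammer A (2*i)*pochhammer B (2*(d-i))) + (if d=1 then A*B else 0))" .
  have "LL A B ?M (PR d) = (\<Sum>i\<le>d. 4*ww d i * (LL A B ?M ([:1,1:]^(2*i) * monom 1 (2*(d-i))) + LL A B ?M ([:1,1:]^(2*i) * monom 1 1)))"
    unfolding PR_def by (simp only: LL_add LL_sum LL_smult)
  also have "\<dots> = (\<Sum>i\<le>d. 4*ww d i * pochhammer (A+B+of_nat(2*(d-i))+1) (2*i) * (B*pochhammer A (2*(d-i)) + A*pochhammer B (2*(d-i))))"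
  proof (intro sum.cong refl)
    fix i assume i: "i \<in> {..d}"
    have "LL A B ?M ([:1,1:]^(2*i) * monom 1 (2*(d-i))) = pochhammer A (2*(d-i)) * pochhammer B (?M-2*(d-i)-2*i) * pochhammer (A + B + of_nat (?M-2*i)) (2*i)"
      by (rule LL_basic) (use i in auto)
    moreover have "LL A B ?M ([:1,1:]^(2*i) * monom 1 1) = pochhammer A 1 * pochhammer B (?M-1-2*i) * pochhammer (A + B + of_nat (?M-2*i)) (2*i)"
      by (rule LL_basic) (use i in auto)
    moreover have "?M-2*(d-i)-2*i = 1" "?M-1-2*i = 2*(d-i)" using i by auto
    moreover have "(of_nat (?M-2*i)::real) = of_nat(2*(d-i))+1"
    proof -
      have "?M-2*i = 2*(d-i)+1" using i by auto
      thus ?thesis by simp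
    qed
    ultimately show "4*ww d i * (LL A B ?M ([:1,1:]^(2*i) * monom 1 (2*(d-i))) + LL A B ?M ([:1,1:]^(2*i) * monom 1 1))
      = 4*ww d i * pochhammer (A+B+of_nat(2*(d-i))+1) (2*i) * (B*pochhammer A (2*(d-i)) + A*pochhammer B (2*(d-i)))"
      by (simp add: pochhammer_1 algebra_simps add.assoc)
  qed
  finally have R: "LL A B ?M (PR d) = (\<Sum>i\<le>d. 4*ww d i * pochhammer (A+B+of_nat(2*(d-i))+1) (2*i) * (B*pochhammer A (2*(d-i)) + A*pochhammer B (2*(d-i))))" .
  show ?thesis using L R PL_PR[of d] by simp
qed





lemma alg_r:
  fixes x y p a b A B N :: real
  assumes "A \<noteq> 0" "B \<noteq> 0" "N \<noteq> 0"
  shows "(2*x*p/N) * (2*y*a/A + 2*y*b/B) * (A*B*N) = 4*(x*y) * p * (B*a + A*b)"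
  using assms by (simp add: field_simps)

lemma main_real:
  fixes A B :: real and d :: nat
  assumes A: "A \<noteq> 0" and B: "B \<noteq> 0" and N: "A+B+2*of_nat d \<noteq> 0"
  shows "(if d=1 then 1 else 0) + (\<Sum>i\<le>d. (2*EE$(2*i)*pochhammer A (2*i)/A) * (2*EE$(2*(d-i))*pochhammer B (2*(d-i))/B))
   = (\<Sum>j\<le>d. (2*EE$(2*(d-j))*pochhammer (A+B+2*of_nat j+1) (2*(d-j))/(A+B+2*of_nat d))
        * (2*EE$(2*j)*pochhammer A (2*j)/A + 2*EE$(2*j)*pochhammer B (2*j)/B))"
proof -
  let ?N = "A+B+2*of_nat d"
  have flip: "(\<Sum>j\<le>d. (2*EE$(2*(d-j))*pochhammer (A+B+2*of_nat j+1) (2*(d-j))/?N)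
        * (2*EE$(2*j)*pochhammer A (2*j)/A + 2*EE$(2*j)*pochhammer B (2*j)/B))
     = (\<Sum>i\<le>d. (2*EE$(2*i)*pochhammer (A+B+of_nat (2*(d-i))+1) (2*i)/?N)
        * (2*EE$(2*(d-i))*pochhammer A (2*(d-i))/A + 2*EE$(2*(d-i))*pochhammer B (2*(d-i))/B))"
    unfolding atLeast0AtMost[symmetric]
    by (subst sum.atLeastAtMost_rev) (intro sum.cong refl, auto)
  have c: "?N * ((\<Sum>i\<le>d. 4*ww d i*pochhammer A (2*i)*pochhammer B (2*(d-i))) + (if d=1 then A*B else 0))
   = (\<Sum>i\<le>d. 4*ww d i * pochhammer (A+B+of_nat(2*(d-i))+1) (2*i) * (B*pochhammer A (2*(d-i)) + A*pochhammer B (2*(d-i))))"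
    by (rule core)
  have l: "((if d=1 then 1 else 0) + (\<Sum>i\<le>d. (2*EE$(2*i)*pochhammer A (2*i)/A) * (2*EE$(2*(d-i))*pochhammer B (2*(d-i))/B))) * (A*B*?N)
    = ?N * ((\<Sum>i\<le>d. 4*ww d i*pochhammer A (2*i)*pochhammer B (2*(d-i))) + (if d=1 then A*B else 0))"
  proof -
    have l1: "(\<Sum>i\<le>d. (2*EE$(2*i)*pochhammer A (2*i)/A) * (2*EE$(2*(d-i))*pochhammer B (2*(d-i))/B)) * (A*B*?N)
      = ?N * (\<Sum>i\<le>d. 4*ww d i*pochhammer A (2*i)*pochhammer B (2*(d-i)))"
      unfolding sum_distrib_right sum_distrib_left
      by (intro sum.cong refl) (use A B in \<open>simp add: ww_def field_simps\<close>)
    have l2: "(if d=1 then 1 else 0) * (A*B*?N) = ?N*(if d=1 then A*B else 0)" by simp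
    show ?thesis by (simp only: distrib_right[of _ _ "A*B*?N"] l1 l2 distrib_left[of ?N] add.commute)
  qed
  have r: "(\<Sum>i\<le>d. (2*EE$(2*i)*pochhammer (A+B+of_nat (2*(d-i))+1) (2*i)/?N)
        * (2*EE$(2*(d-i))*pochhammer A (2*(d-i))/A + 2*EE$(2*(d-i))*pochhammer B (2*(d-i))/B)) * (A*B*?N)
    = (\<Sum>i\<le>d. 4*ww d i * pochhammer (A+B+of_nat(2*(d-i))+1) (2*i) * (B*pochhammer A (2*(d-i)) + A*pochhammer B (2*(d-i))))"
    unfolding sum_distrib_right
  proof (intro sum.cong refl)
    fix i
    show "(2*EE$(2*i)*pochhammer (A+B+of_nat (2*(d-i))+1) (2*i)/?N)
        * (2*EE$(2*(d-i))*pochhammer A (2*(d-i))/A + 2*EE$(2*(d-i))*pochhammer B (2*(d-i))/B) * (A*B*?N)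
      = 4*ww d i * pochhammer (A+B+of_nat(2*(d-i))+1) (2*i) * (B*pochhammer A (2*(d-i)) + A*pochhammer B (2*(d-i)))"
      unfolding ww_def by (rule alg_r[OF A B N])
  qed
  have "((if d=1 then 1 else 0) + (\<Sum>i\<le>d. (2*EE$(2*i)*pochhammer A (2*i)/A) * (2*EE$(2*(d-i))*pochhammer B (2*(d-i))/B))) * (A*B*?N)
     = (\<Sum>j\<le>d. (2*EE$(2*(d-j))*pochhammer (A+B+2*of_nat j+1) (2*(d-j))/?N)
        * (2*EE$(2*j)*pochhammer A (2*j)/A + 2*EE$(2*j)*pochhammer B (2*j)/B)) * (A*B*?N)"
    unfolding flip l r c ..
  moreover have "A*B*?N \<noteq> 0" using A B N by simp
  ultimately show ?thesis by simp
qed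





lemma pf: "pochhammer (of_nat a + 1 :: real) k = fact (a+k) / fact a"
proof -
  have "(fact (a+k) :: real) = pochhammer 1 (a+k)" by (rule pochhammer_fact)
  also have "\<dots> = pochhammer 1 a * pochhammer (1 + of_nat a) k" by (rule pochhammer_product')
  also have "\<dots> = fact a * pochhammer (of_nat a + 1) k" by (simp add: pochhammer_fact add.commute)
  finally show ?thesis by (simp add: field_simps)
qed

lemma alg_b: "(f::real) \<noteq> 0 \<Longrightarrow> 2/N * (F/(fa*f)) * (E*f) = 2*E*(F/fa)/N"
  by (cases "N=0"; cases "fa=0") (simp_all add: field_simps)

lemma bq_uniform:
  fixes q i0 :: int and t :: nat
  assumes i0: "i0 \<ge> 0" and nz: "2*(i0+int t)+q \<noteq> 0"
  shows "bq q (i0+int t) i0 = 2*EE$(2*t)*pochhammer (of_int(2*i0+q)+1) (2*t) / of_int(2*(i0+int t)+q)"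
proof -
  have bern: "bernoulli (nat(2*(i0+int t - i0))) = EE$(2*t) * fact(2*t)"
  proof -
    have "nat(2*(i0+int t - i0)) = 2*t" by simp
    thus ?thesis by (simp add: EE_nth)
  qed
  show ?thesis
  proof (cases "2*(i0+int t)+q > 0")
    case pos: True
    have c1: "i0+int t \<ge> max 0 ((-q) div 2 + 1)" using pos i0 by presburger
    have bq: "bq q (i0+int t) i0 = 2 / of_int (2*(i0+int t)+q) * ibinom (2*(i0+int t)+q) (2*i0+q) * (EE$(2*t) * fact(2*t))"
      unfolding bq_def using i0 nz c1 bern by simp
    show ?thesis
    proof (cases "2*i0+q < 0")
      case True
      have ib: "ibinom (2*(i0+int t)+q) (2*i0+q) = 0" using True by (simp add: ibinom_def)
      have "pochhammer (of_int(2*i0+q)+1 :: real) (2*t) = 0"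
        unfolding pochhammer_eq_0_iff
      proof (intro exI conjI)
        show "nat (-(2*i0+q)-1) < 2*t" using True pos by (subst nat_less_iff) auto
        show "(of_int(2*i0+q)+1 :: real) = - of_nat (nat (-(2*i0+q)-1))" using True
          by (simp add: of_nat_nat)
      qed
      thus ?thesis using bq ib by simp
    next
      case False
      define a where "a = nat (2*i0+q)"
      have aA: "2*i0+q = int a" using False a_def by simp
      have NA: "2*(i0+int t)+q = int (a + 2*t)" using aA by simp
      have ib: "ibinom (2*(i0+int t)+q) (2*i0+q) = fact (a+2*t) / (fact a * fact (2*t))"
      proof -
        have g: "(of_int (int (a+2*t)) :: real) gchoose nat (int a) = real ((a+2*t) choose a)"
          by (simp only: of_int_of_nat_eq nat_int binomial_gbinomial)
        have "a \<le> a+2*t" by simp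
        hence "real ((a+2*t) choose a) = fact (a+2*t) / (fact a * fact (a+2*t-a))"
          by (rule binomial_fact)
        thus ?thesis unfolding ibinom_def NA aA using g by simp
      qed
      have "bq q (i0+int t) i0 = 2 / of_nat (a + 2*t) * (fact (a+2*t) / (fact a * fact (2*t))) * (EE$(2*t) * fact(2*t))"
        using bq ib NA by simp
      also have "\<dots> = 2*EE$(2*t)*(fact (a+2*t) / fact a) / of_nat (a + 2*t)"
        by (rule alg_b) simp
      also have "\<dots> = 2*EE$(2*t)*pochhammer (of_int(2*i0+q)+1) (2*t) / of_int(2*(i0+int t)+q)"
        unfolding aA NA by (simp add: pf)
      finally show ?thesis .
    qed
  next
    case neg: False
    hence neg': "2*(i0+int t)+q < 0" using nz by linarith
    have c1: "\<not> i0+int t \<ge> max 0 ((-q) div 2 + 1)" using neg' by presburger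
    have c2: "i0+int t \<le> (- (q+1)) div 2" using neg' by presburger
    define p where "p = nat (-(2*(i0+int t)+q)) - 1"
    have Nn: "-(2*(i0+int t)+q) = int (Suc p)" using neg' p_def by simp
    have Mn: "-(2*i0+q) = int (Suc (p + 2*t))" using Nn by simp
    have bq: "bq q (i0+int t) i0 = 2 / of_int (2*i0+q) * ibinom (-2*i0-q) (-2*(i0+int t)-q) * (EE$(2*t) * fact(2*t))"
      unfolding bq_def using i0 nz c1 c2 bern by simp
    have e1: "-2*i0-q = int (Suc (p+2*t))" using Mn by simp
    have e2: "-2*(i0+int t)-q = int (Suc p)" using Nn by simp
    have ib: "ibinom (-2*i0-q) (-2*(i0+int t)-q) = fact (Suc (p+2*t)) / (fact (Suc p) * fact (2*t))"
    proof -
      have "Suc p \<le> Suc (p+2*t)" by simp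
      hence "real (Suc (p + 2 * t) choose Suc p) = fact (Suc (p+2*t)) / (fact (Suc p) * fact (Suc (p+2*t) - Suc p))"
        by (rule binomial_fact)
      moreover have "Suc (p+2*t) - Suc p = 2*t" by simp
      ultimately show ?thesis unfolding ibinom_def e1 e2
        by (simp add: binomial_gbinomial[symmetric] del: of_nat_Suc)
    qed
    have po: "pochhammer (of_int(2*i0+q)+1 :: real) (2*t) = fact (p+2*t) / fact p"
    proof -
      have "(of_int(2*i0+q)+1 :: real) = - of_nat (p+2*t)"
        using Mn by (simp add: algebra_simps)
      hence "pochhammer (of_int(2*i0+q)+1 :: real) (2*t) = pochhammer (- of_nat (p+2*t)) (2*t)"
        by (simp only:)
      also have "\<dots> = (-1)^(2*t) * pochhammer (of_nat (p+2*t) - of_nat (2*t) + 1) (2*t)"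
        by (rule pochhammer_minus)
      also have "\<dots> = pochhammer (of_nat p + 1) (2*t)" by simp
      finally show ?thesis by (simp add: pf)
    qed
    have "bq q (i0+int t) i0 = 2 / (- of_nat (Suc (p+2*t))) * (fact (Suc (p+2*t)) / (fact (Suc p) * fact (2*t))) * (EE$(2*t) * fact(2*t))"
      using bq ib Mn by (simp add: of_int_minus[symmetric] del: of_int_minus)
    also have "\<dots> = 2*EE$(2*t)*(fact (p+2*t) / fact p) / (- of_nat (Suc p))"
      by (simp add: field_simps fact_Suc del: of_nat_Suc) 
    also have "\<dots> = 2*EE$(2*t)*pochhammer (of_int(2*i0+q)+1) (2*t) / of_int(2*(i0+int t)+q)"
    proof -
      have h: "(of_int(2*(i0+int t)+q) :: real) = - of_nat (Suc p)" using Nn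
        by (metis minus_minus of_int_minus of_int_of_nat_eq)
      show ?thesis unfolding po h ..
    qed
    finally show ?thesis .
  qed
qed





lemma poch_shift: "(a::real) \<noteq> 0 \<Longrightarrow> a + of_nat k \<noteq> 0 \<Longrightarrow> pochhammer (a+1) k / (a + of_nat k) = pochhammer a k / a"
proof -
  assume a: "a \<noteq> 0" "a + of_nat k \<noteq> 0"
  have "a * pochhammer (a+1) k = pochhammer a k * (a + of_nat k)"
    using pochhammer_rec[of a k] pochhammer_Suc[of a k] by simp
  thus ?thesis using a by (simp add: field_simps)
qed

lemma bq_rA:
  fixes q i0 :: int and t :: nat
  assumes q: "q > 0 \<or> odd q" and i0: "i0 \<ge> 0"
  shows "bq q (i0+int t) i0 = 2*EE$(2*t)*pochhammer (of_int(2*i0+q)) (2*t) / of_int(2*i0+q)"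
proof -
  have nz1: "2*i0+q \<noteq> 0" using q i0 by presburger
  have nz2: "2*(i0+int t)+q \<noteq> 0" using q i0 by presburger
  have "bq q (i0+int t) i0 = 2*EE$(2*t)*(pochhammer (of_int(2*i0+q)+1) (2*t) / (of_int(2*i0+q) + of_nat (2*t)))"
    using bq_uniform[OF i0 nz2] by (simp add: algebra_simps)
  also have "\<dots> = 2*EE$(2*t)*(pochhammer (of_int(2*i0+q)) (2*t) / of_int(2*i0+q))"
  proof -
    have "(of_int(2*i0+q) :: real) \<noteq> 0" using nz1 by simp
    moreover have "(of_int(2*i0+q) :: real) + of_nat (2*t) \<noteq> 0"
    proof -
      have "(of_int(2*i0+q) :: real) + of_nat (2*t) = of_int(2*(i0+int t)+q)" by simp
      thus ?thesis using nz2 by (simp only:)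
    qed
    ultimately have "pochhammer (of_int(2*i0+q)+1) (2*t) / (of_int(2*i0+q) + of_nat (2*t)) = pochhammer (of_int(2*i0+q) :: real) (2*t) / of_int(2*i0+q)"
      by (rule poch_shift)
    thus ?thesis by (simp only:)
  qed
  finally show ?thesis by simp
qed

theorem theorem6p2:
  fixes r s n \<alpha> \<beta> :: int
  assumes "r > 0 \<or> odd r" and "s > 0 \<or> odd s"
    and "n \<ge> 0" and "2*n \<noteq> -(r + s)"
    and "0 \<le> \<alpha>" and "\<alpha> \<le> n" and "0 \<le> \<beta>" and "\<beta> \<le> n"
  shows "(if \<alpha> + \<beta> = n - 1 then 1 else 0)
           + (\<Sum>l\<in>{\<alpha>..n - \<beta>}. bq r l \<alpha> * bq s (n - l) \<beta>)
         = (\<Sum>k\<in>{0..n}. bq (r + s) n k * (bq r (k - \<beta>) \<alpha> + bq s (k - \<alpha>) \<beta>))"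
proof (cases "\<alpha> + \<beta> \<le> n")
  case False
  have "(\<Sum>k\<in>{0..n}. bq (r + s) n k * (bq r (k - \<beta>) \<alpha> + bq s (k - \<alpha>) \<beta>)) = 0"
  proof (rule sum.neutral, intro ballI)
    fix k assume k: "k \<in> {0..n}"
    have "bq r (k - \<beta>) \<alpha> = 0" "bq s (k - \<alpha>) \<beta> = 0" using k False by (auto simp: bq_def)
    thus "bq (r + s) n k * (bq r (k - \<beta>) \<alpha> + bq s (k - \<alpha>) \<beta>) = 0" by simp
  qed
  moreover have "{\<alpha>..n - \<beta>} = {}" using False by auto
  ultimately show ?thesis using False by simp
next
  case True
  define d where "d = nat (n - \<alpha> - \<beta>)"
  have nd: "n = \<alpha> + \<beta> + int d" using True d_def by simp
  define A where "A = (of_int (2*\<alpha>+r) :: real)"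
  define B where "B = (of_int (2*\<beta>+s) :: real)"
  have "2*\<alpha>+r \<noteq> 0" using assms(1,5) by presburger
  hence A: "A \<noteq> 0" unfolding A_def by simp
  have "2*\<beta>+s \<noteq> 0" using assms(2,7) by presburger
  hence B: "B \<noteq> 0" unfolding B_def by simp
  have N: "A + B + 2 * of_nat d \<noteq> 0"
  proof -
    have "A + B + 2 * of_nat d = of_int (2*n + (r+s))" unfolding A_def B_def nd by simp
    thus ?thesis using assms(4) by simp
  qed
  have delta: "(if \<alpha> + \<beta> = n - 1 then 1 else 0) = (if d = 1 then 1 else (0::real))"
    using nd by auto
  have lhs: "(\<Sum>l\<in>{\<alpha>..n - \<beta>}. bq r l \<alpha> * bq s (n - l) \<beta>)
      = (\<Sum>i\<le>d. (2*EE$(2*i)*pochhammer A (2*i)/A) * (2*EE$(2*(d-i))*pochhammer B (2*(d-i))/B))"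
  proof -
    have "{\<alpha>..n - \<beta>} = (\<lambda>i. \<alpha> + int i) ` {..d}"
    proof
      show "{\<alpha>..n - \<beta>} \<subseteq> (\<lambda>i. \<alpha> + int i) ` {..d}"
      proof
        fix l assume l: "l \<in> {\<alpha>..n - \<beta>}"
        hence "l = \<alpha> + int (nat (l - \<alpha>))" "nat (l - \<alpha>) \<in> {..d}" using nd by auto
        thus "l \<in> (\<lambda>i. \<alpha> + int i) ` {..d}" by (metis rev_image_eqI)
      qed
    qed (use nd in auto)
    hence "(\<Sum>l\<in>{\<alpha>..n - \<beta>}. bq r l \<alpha> * bq s (n - l) \<beta>) = (\<Sum>i\<le>d. bq r (\<alpha> + int i) \<alpha> * bq s (n - (\<alpha> + int i)) \<beta>)"
      by (simp add: sum.reindex inj_on_def)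
    also have "\<dots> = (\<Sum>i\<le>d. (2*EE$(2*i)*pochhammer A (2*i)/A) * (2*EE$(2*(d-i))*pochhammer B (2*(d-i))/B))"
    proof (intro sum.cong refl)
      fix i assume i: "i \<in> {..d}"
      have "n - (\<alpha> + int i) = \<beta> + int (d - i)" using i nd by auto
      thus "bq r (\<alpha> + int i) \<alpha> * bq s (n - (\<alpha> + int i)) \<beta> = (2*EE$(2*i)*pochhammer A (2*i)/A) * (2*EE$(2*(d-i))*pochhammer B (2*(d-i))/B)"
        using bq_rA[OF assms(1) assms(5), of i] bq_rA[OF assms(2) assms(7), of "d-i"]
        by (simp add: A_def B_def)
    qed
    finally show ?thesis .
  qed
  have rhs: "(\<Sum>k\<in>{0..n}. bq (r + s) n k * (bq r (k - \<beta>) \<alpha> + bq s (k - \<alpha>) \<beta>))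
     = (\<Sum>j\<le>d. (2*EE$(2*(d-j))*pochhammer (A+B+2*of_nat j+1) (2*(d-j))/(A+B+2*of_nat d))
        * (2*EE$(2*j)*pochhammer A (2*j)/A + 2*EE$(2*j)*pochhammer B (2*j)/B))"
  proof -
    have "(\<Sum>k\<in>{0..n}. bq (r + s) n k * (bq r (k - \<beta>) \<alpha> + bq s (k - \<alpha>) \<beta>))
        = (\<Sum>k\<in>(\<lambda>j. \<alpha> + \<beta> + int j) ` {..d}. bq (r + s) n k * (bq r (k - \<beta>) \<alpha> + bq s (k - \<alpha>) \<beta>))"
    proof (rule sum.mono_neutral_right)
      show "(\<lambda>j. \<alpha> + \<beta> + int j) ` {..d} \<subseteq> {0..n}" using nd assms by auto
      show "\<forall>k\<in>{0..n} - (\<lambda>j. \<alpha> + \<beta> + int j) ` {..d}. bq (r + s) n k * (bq r (k - \<beta>) \<alpha> + bq s (k - \<alpha>) \<beta>) = 0"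
      proof
        fix k assume k: "k \<in> {0..n} - (\<lambda>j. \<alpha> + \<beta> + int j) ` {..d}"
        have "k < \<alpha> + \<beta>"
        proof (rule ccontr)
          assume "\<not> k < \<alpha> + \<beta>"
          hence "k = \<alpha> + \<beta> + int (nat (k - \<alpha> - \<beta>))" "nat (k - \<alpha> - \<beta>) \<in> {..d}" using k nd by auto
          hence "k \<in> (\<lambda>j. \<alpha> + \<beta> + int j) ` {..d}" by (metis rev_image_eqI)
          with k show False by auto
        qed
        hence "bq r (k - \<beta>) \<alpha> = 0" "bq s (k - \<alpha>) \<beta> = 0" by (auto simp: bq_def)
        thus "bq (r + s) n k * (bq r (k - \<beta>) \<alpha> + bq s (k - \<alpha>) \<beta>) = 0" by simp
      qed
    qed simp
    also have "\<dots> = (\<Sum>j\<le>d. bq (r + s) n (\<alpha> + \<beta> + int j) * (bq r (\<alpha> + int j) \<alpha> + bq s (\<beta> + int j) \<beta>))"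
      by (simp add: sum.reindex inj_on_def algebra_simps)
    also have "\<dots> = (\<Sum>j\<le>d. (2*EE$(2*(d-j))*pochhammer (A+B+2*of_nat j+1) (2*(d-j))/(A+B+2*of_nat d))
        * (2*EE$(2*j)*pochhammer A (2*j)/A + 2*EE$(2*j)*pochhammer B (2*j)/B))"
    proof (intro sum.cong refl)
      fix j assume j: "j \<in> {..d}"
      have nj: "n = (\<alpha> + \<beta> + int j) + int (d - j)" using j nd by auto
      have i0: "\<alpha> + \<beta> + int j \<ge> 0" using assms by simp
      have nz: "2*((\<alpha> + \<beta> + int j) + int (d - j)) + (r+s) \<noteq> 0" using assms(4) nj by auto
      have u: "bq (r+s) n (\<alpha> + \<beta> + int j) = 2*EE$(2*(d-j))*pochhammer (of_int(2*(\<alpha> + \<beta> + int j)+(r+s))+1) (2*(d-j)) / of_int(2*((\<alpha> + \<beta> + int j)+int (d-j))+(r+s))"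
        using bq_uniform[OF i0 nz] nj by simp
      have e1: "(of_int(2*(\<alpha> + \<beta> + int j)+(r+s))+1 :: real) = A+B+2*of_nat j+1"
        unfolding A_def B_def by simp
      have e2: "(of_int(2*((\<alpha> + \<beta> + int j)+int (d-j))+(r+s)) :: real) = A+B+2*of_nat d"
      proof -
        have "(\<alpha> + \<beta> + int j)+int (d-j) = \<alpha> + \<beta> + int d" using j by simp
        thus ?thesis unfolding A_def B_def by simp
      qed
      show "bq (r + s) n (\<alpha> + \<beta> + int j) * (bq r (\<alpha> + int j) \<alpha> + bq s (\<beta> + int j) \<beta>)
        = (2*EE$(2*(d-j))*pochhammer (A+B+2*of_nat j+1) (2*(d-j))/(A+B+2*of_nat d))
        * (2*EE$(2*j)*pochhammer A (2*j)/A + 2*EE$(2*j)*pochhammer B (2*j)/B)"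
        unfolding u e1 e2 bq_rA[OF assms(1) assms(5), of j] bq_rA[OF assms(2) assms(7), of j]
        by (simp add: A_def B_def)
    qed
    finally show ?thesis .
  qed
  show ?thesis unfolding delta lhs rhs by (rule main_real[OF A B N])
qed



end
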